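(* Under the standing assumptions, for every $j$ with $1\le j\le n-1$ and every $z\in\mathbb C$, \begin{align*} \widehat\alpha_2^{(2j)}(z)&=\widehat\alpha_2^{(2j-2)}(z)+(z-a)\,Q_{2,j}^*(\bar z)\,\widehat H_{2,j}^{-1}\,P_{2,j}(a),\\ \widehat\beta_2^{(2j)}(z)&=\widehat\beta_2^{(2j-2)}(z)+(z-a)\,Q_{2,j}^*(\bar z)\,\widehat H_{2,j}^{-1}\,Q_{2,j}(a),\\ \widehat\gamma_2^{(2j)}(z)&=\widehat\gamma_2^{(2j-2)}(z)-(z-a)\,P_{2,j}^*(\bar z)\,\widehat H_{2,j}^{-1}\,P_{2,j}(a),\\ \widehat\delta_2^{(2j)}(z)&=\widehat\delta_2^{(2j-2)}(z)-(z-a)\,P_{2,j}^*(\bar z)\,\widehat H_{2,j}^{-1}\,Q_{2,j}(a). \end{align*}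
   Context: Let $q,n\in\mathbb N$ and let $a<b$ be real numbers. All matrices are complex; $I_q$, $0_q$ are the $q\times q$ identity and zero matrices; for a matrix-valued function $F$, $F^*(\bar z)$ means $(F(\bar z))^*$. Let $s_0,\dots,s_{2n+1}$ be Hermitian $q\times q$ matrices and set $\widehat s_j:=-ab\,s_j+(a+b)s_{j+1}-s_{j+2}$. Define the block Hankel matrices $H_{1,j}:=(s_{l+k})_{l,k=0}^{j}$, $H_{2,j}:=(\widehat s_{l+k})_{l,k=0}^{j}$, $K_{1,j}:=(bs_{l+k}-s_{l+k+1})_{l,k=0}^{j}$, $K_{2,j}:=(-as_{l+k}+s_{l+k+1})_{l,k=0}^{j}$. Standing assumption: $H_{1,n},H_{2,n-1},K_{1,n},K_{2,n}$ are positive definite. Let $T_0:=0_q$ and, for $j\ge1$, let $T_j$ be the $(j+1)\times(j+1)$ block matrix (blocks of size $q\times q$) with $I_q$ in the block positions $(l+1,l)$, $l=0,\dots,j-1$, and $0_q$ elsewhere; $R_j(z):=(I_{(j+1)q}-zT_j)^{-1}$; $v_j:=\mathrm{col}(I_q,0_q,\dots,0_q)\in\mathbb C^{(j+1)q\times q}$. Let $u_{2,0}:=-(a+b)s_0+s_1$ and $u_{2,j}:=\mathrm{col}(u_{2,0},-\widehat s_0,\dots,-\widehat s_{j-1})\in\mathbb C^{(j+1)q\times q}$. For $j\ge1$ let $Y_{2,j}:=\mathrm{col}(\widehat s_j,\dots,\widehat s_{2j-1})$. Schur complements: $\widehat H_{2,0}:=\widehat s_0$, $\widehat H_{2,j}:=\widehat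 s_{2j}-Y_{2,j}^*H_{2,j-1}^{-1}Y_{2,j}$ ($j\ge1$). Polynomials: $P_{2,0}:=I_q$, $Q_{2,0}(z):=-(u_{2,0}+zs_0)$, and for $j\ge1$: $P_{2,j}(z):=(-Y_{2,j}^*H_{2,j-1}^{-1},\,I_q)R_j(z)v_j$, $Q_{2,j}(z):=-(-Y_{2,j}^*H_{2,j-1}^{-1},\,I_q)R_j(z)(u_{2,j}+zv_js_0)$. For $0\le j\le n-1$ the $2q\times 2q$ matrix polynomial $\widehat U_2^{(2j)}=\begin{pmatrix}\widehat\alpha_2^{(2j)}&\widehat\beta_2^{(2j)}\\ \widehat\gamma_2^{(2j)}&\widehat\delta_2^{(2j)}\end{pmatrix}$ is defined by $\widehat\alpha_2^{(2j)}(z)=I_q-(z-a)(u_{2,j}^*+zs_0v_j^* )R_j^*(\bar z)H_{2,j}^{-1}R_j(a)v_j$, $\widehat\beta_2^{(2j)}(z)=(z-a)\big(s_0+(u_{2,j}^*+zs_0v_j^* )R_j^*(\bar z)H_{2,j}^{-1}R_j(a)(u_{2,j}+av_js_0)\big)$, $\widehat\gamma_2^{(2j)}(z)=-(z-a)v_j^*R_j^*(\bar z)H_{2,j}^{-1}R_j(a)v_j$, $\widehat\delta_2^{(2j)}(z)=I_q+(z-a)v_j^*R_j^*(\bar z)H_{2,j}^{-1}R_j(a)(u_{2,j}+av_js_0)$. *)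

theory Defs
  imports "Jordan_Normal_Form.Schur_Decomposition"
begin

definition block_mat :: "nat \<Rightarrow> nat \<Rightarrow> nat \<Rightarrow> (nat \<Rightarrow> nat \<Rightarrow> complex mat) \<Rightarrow> complex mat" where
  "block_mat q m k f = mat (m*q) (k*q) (\<lambda>(r,c). f (r div q) (c div q) $$ (r mod q, c mod q))"

definition block_col :: "nat \<Rightarrow> nat \<Rightarrow> (nat \<Rightarrow> complex mat) \<Rightarrow> complex mat" where
  "block_col q m f = block_mat q m 1 (\<lambda>l k. f l)"

definition hcat :: "complex mat \<Rightarrow> complex mat \<Rightarrow> complex mat" where
  "hcat A B = mat (dim_row A) (dim_col A + dim_col B)
     (\<lambda>(i,k). if k < dim_col A then A $$ (i,k) else B $$ (i, k - dim_col A))"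

(* inverse of a square matrix (meaningful when it is invertible) *)
definition minv :: "complex mat \<Rightarrow> complex mat" where
  "minv A = (SOME B. B \<in> carrier_mat (dim_row A) (dim_row A) \<and>
                     A * B = 1\<^sub>m (dim_row A) \<and> B * A = 1\<^sub>m (dim_row A))"

definition hermitian :: "complex mat \<Rightarrow> bool" where
  "hermitian A \<longleftrightarrow> square_mat A \<and> mat_adjoint A = A"

definition pos_def :: "complex mat \<Rightarrow> bool" where
  "pos_def A \<longleftrightarrow> hermitian A \<and>
     (\<forall>x \<in> carrier_vec (dim_row A). x \<noteq> 0\<^sub>v (dim_row A) \<longrightarrow>
        Im (conjugate x \<bullet> (A *\<^sub>v x)) = 0 \<and> Re (conjugate x \<bullet> (A *\<^sub>v x)) > 0)"

definition shat :: "real \<Rightarrow> real \<Rightarrow> (nat \<Rightarrow> complex mat) \<Rightarrow> nat \<Rightarrow> complex mat" where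
  "shat a b s j = (- complex_of_real (a*b)) \<cdot>\<^sub>m s j + complex_of_real (a+b) \<cdot>\<^sub>m s (j+1) - s (j+2)"

definition H1 :: "nat \<Rightarrow> (nat \<Rightarrow> complex mat) \<Rightarrow> nat \<Rightarrow> complex mat" where
  "H1 q s j = block_mat q (j+1) (j+1) (\<lambda>l k. s (l+k))"

definition H2 :: "nat \<Rightarrow> real \<Rightarrow> real \<Rightarrow> (nat \<Rightarrow> complex mat) \<Rightarrow> nat \<Rightarrow> complex mat" where
  "H2 q a b s j = block_mat q (j+1) (j+1) (\<lambda>l k. shat a b s (l+k))"

definition K1 :: "nat \<Rightarrow> real \<Rightarrow> (nat \<Rightarrow> complex mat) \<Rightarrow> nat \<Rightarrow> complex mat" where
  "K1 q b s j = block_mat q (j+1) (j+1) (\<lambda>l k. complex_of_real b \<cdot>\<^sub>m s (l+k) - s (l+k+1))"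

definition K2 :: "nat \<Rightarrow> real \<Rightarrow> (nat \<Rightarrow> complex mat) \<Rightarrow> nat \<Rightarrow> complex mat" where
  "K2 q a s j = block_mat q (j+1) (j+1) (\<lambda>l k. (- complex_of_real a) \<cdot>\<^sub>m s (l+k) + s (l+k+1))"

definition Tm :: "nat \<Rightarrow> nat \<Rightarrow> complex mat" where
  "Tm q j = block_mat q (j+1) (j+1) (\<lambda>l k. if l = k + 1 then 1\<^sub>m q else 0\<^sub>m q q)"

definition Rm :: "nat \<Rightarrow> nat \<Rightarrow> complex \<Rightarrow> complex mat" where
  "Rm q j z = minv (1\<^sub>m ((j+1)*q) - z \<cdot>\<^sub>m Tm q j)"

definition vm :: "nat \<Rightarrow> nat \<Rightarrow> complex mat" where
  "vm q j = block_col q (j+1) (\<lambda>l. if l = 0 then 1\<^sub>m q else 0\<^sub>m q q)"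

definition u20 :: "real \<Rightarrow> real \<Rightarrow> (nat \<Rightarrow> complex mat) \<Rightarrow> complex mat" where
  "u20 a b s = (- complex_of_real (a+b)) \<cdot>\<^sub>m s 0 + s 1"

definition u2 :: "nat \<Rightarrow> real \<Rightarrow> real \<Rightarrow> (nat \<Rightarrow> complex mat) \<Rightarrow> nat \<Rightarrow> complex mat" where
  "u2 q a b s j = block_col q (j+1) (\<lambda>l. if l = 0 then u20 a b s else - shat a b s (l - 1))"

definition Y2 :: "nat \<Rightarrow> real \<Rightarrow> real \<Rightarrow> (nat \<Rightarrow> complex mat) \<Rightarrow> nat \<Rightarrow> complex mat" where
  "Y2 q a b s j = block_col q j (\<lambda>l. shat a b s (j + l))"

definition Hhat2 :: "nat \<Rightarrow> real \<Rightarrow> real \<Rightarrow> (nat \<Rightarrow> complex mat) \<Rightarrow> nat \<Rightarrow> complex mat" where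
  "Hhat2 q a b s j = (if j = 0 then shat a b s 0
     else shat a b s (2*j) - mat_adjoint (Y2 q a b s j) * minv (H2 q a b s (j-1)) * Y2 q a b s j)"

definition rowP :: "nat \<Rightarrow> real \<Rightarrow> real \<Rightarrow> (nat \<Rightarrow> complex mat) \<Rightarrow> nat \<Rightarrow> complex mat" where
  "rowP q a b s j = hcat (- (mat_adjoint (Y2 q a b s j) * minv (H2 q a b s (j-1)))) (1\<^sub>m q)"

definition P2 :: "nat \<Rightarrow> real \<Rightarrow> real \<Rightarrow> (nat \<Rightarrow> complex mat) \<Rightarrow> nat \<Rightarrow> complex \<Rightarrow> complex mat" where
  "P2 q a b s j z = (if j = 0 then 1\<^sub>m q else rowP q a b s j * Rm q j z * vm q j)"

definition Q2 :: "nat \<Rightarrow> real \<Rightarrow> real \<Rightarrow> (nat \<Rightarrow> complex mat) \<Rightarrow> nat \<Rightarrow> complex \<Rightarrow> complex mat" where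
  "Q2 q a b s j z = (if j = 0 then - (u20 a b s + z \<cdot>\<^sub>m s 0)
     else - (rowP q a b s j * Rm q j z * (u2 q a b s j + z \<cdot>\<^sub>m (vm q j * s 0))))"

definition Mid :: "nat \<Rightarrow> real \<Rightarrow> real \<Rightarrow> (nat \<Rightarrow> complex mat) \<Rightarrow> nat \<Rightarrow> complex \<Rightarrow> complex mat" where
  "Mid q a b s j z = mat_adjoint (Rm q j (cnj z)) * minv (H2 q a b s j) * Rm q j (complex_of_real a)"

definition Lrow :: "nat \<Rightarrow> real \<Rightarrow> real \<Rightarrow> (nat \<Rightarrow> complex mat) \<Rightarrow> nat \<Rightarrow> complex \<Rightarrow> complex mat" where
  "Lrow q a b s j z = mat_adjoint (u2 q a b s j) + z \<cdot>\<^sub>m (s 0 * mat_adjoint (vm q j))"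

definition Rcol :: "nat \<Rightarrow> real \<Rightarrow> real \<Rightarrow> (nat \<Rightarrow> complex mat) \<Rightarrow> nat \<Rightarrow> complex mat" where
  "Rcol q a b s j = u2 q a b s j + complex_of_real a \<cdot>\<^sub>m (vm q j * s 0)"

definition alpha2 :: "nat \<Rightarrow> real \<Rightarrow> real \<Rightarrow> (nat \<Rightarrow> complex mat) \<Rightarrow> nat \<Rightarrow> complex \<Rightarrow> complex mat" where
  "alpha2 q a b s j z = 1\<^sub>m q - (z - complex_of_real a) \<cdot>\<^sub>m
     (Lrow q a b s j z * Mid q a b s j z * vm q j)"

definition beta2 :: "nat \<Rightarrow> real \<Rightarrow> real \<Rightarrow> (nat \<Rightarrow> complex mat) \<Rightarrow> nat \<Rightarrow> complex \<Rightarrow> complex mat" where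
  "beta2 q a b s j z = (z - complex_of_real a) \<cdot>\<^sub>m
     (s 0 + Lrow q a b s j z * Mid q a b s j z * Rcol q a b s j)"

definition gamma2 :: "nat \<Rightarrow> real \<Rightarrow> real \<Rightarrow> (nat \<Rightarrow> complex mat) \<Rightarrow> nat \<Rightarrow> complex \<Rightarrow> complex mat" where
  "gamma2 q a b s j z = - ((z - complex_of_real a) \<cdot>\<^sub>m
     (mat_adjoint (vm q j) * Mid q a b s j z * vm q j))"

definition delta2 :: "nat \<Rightarrow> real \<Rightarrow> real \<Rightarrow> (nat \<Rightarrow> complex mat) \<Rightarrow> nat \<Rightarrow> complex \<Rightarrow> complex mat" where
  "delta2 q a b s j z = 1\<^sub>m q + (z - complex_of_real a) \<cdot>\<^sub>m
     (mat_adjoint (vm q j) * Mid q a b s j z * Rcol q a b s j)"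

end

theory Submission
  imports Defs
begin



lemma adj_alt: "mat_adjoint (A::complex mat) = mat (dim_col A) (dim_row A) (\<lambda>(i,k). cnj (A $$ (k,i)))"
  by (rule eq_matI) (auto simp: mat_adjoint_def mat_of_rows_def)

lemma adj_dims[simp]: "dim_row (mat_adjoint (A::complex mat)) = dim_col A"
  "dim_col (mat_adjoint (A::complex mat)) = dim_row A"
  by (auto simp: adj_alt)

lemma adj_carrier[simp]: "(A::complex mat) \<in> carrier_mat n m \<Longrightarrow> mat_adjoint A \<in> carrier_mat m n"
  by (auto simp: adj_alt)

lemma adj_index[simp]: "i < dim_col A \<Longrightarrow> k < dim_row A \<Longrightarrow> mat_adjoint (A::complex mat) $$ (i,k) = cnj (A $$ (k,i))"
  by (auto simp: adj_alt)

lemma adj_adj[simp]: "mat_adjoint (mat_adjoint (A::complex mat)) = A"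
  by (rule eq_matI) auto

lemma adj_mult: assumes "(A::complex mat) \<in> carrier_mat n m" "B \<in> carrier_mat m k"
  shows "mat_adjoint (A * B) = mat_adjoint B * mat_adjoint A"
  using assms by (intro eq_matI) (auto simp: scalar_prod_def row_def col_def intro!: sum.cong)

lemma adj_add: assumes "(A::complex mat) \<in> carrier_mat n m" "B \<in> carrier_mat n m"
  shows "mat_adjoint (A + B) = mat_adjoint A + mat_adjoint B"
  using assms by (intro eq_matI) auto

lemma adj_minus: assumes "(A::complex mat) \<in> carrier_mat n m" "B \<in> carrier_mat n m"
  shows "mat_adjoint (A - B) = mat_adjoint A - mat_adjoint B"
  using assms by (intro eq_matI) auto

lemma adj_uminus: "mat_adjoint (- (A::complex mat)) = - mat_adjoint A"
  by (intro eq_matI) auto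

lemma adj_smult: "mat_adjoint (c \<cdot>\<^sub>m (A::complex mat)) = cnj c \<cdot>\<^sub>m mat_adjoint A"
  by (intro eq_matI) auto

lemma adj_one[simp]: "mat_adjoint (1\<^sub>m n :: complex mat) = 1\<^sub>m n"
  by (intro eq_matI) auto

lemma minv_unique: assumes A: "(A::complex mat) \<in> carrier_mat n n" and B: "B \<in> carrier_mat n n"
  and AB: "A * B = 1\<^sub>m n"
  shows "minv A = B"
proof -
  have BA: "B * A = 1\<^sub>m n" using mat_mult_left_right_inverse[OF A B AB] .
  have ex: "\<exists>X. X \<in> carrier_mat (dim_row A) (dim_row A) \<and> A * X = 1\<^sub>m (dim_row A) \<and> X * A = 1\<^sub>m (dim_row A)"
    using A B AB BA by auto
  from someI_ex[OF ex] have X: "minv A \<in> carrier_mat n n" "A * minv A = 1\<^sub>m n" "minv A * A = 1\<^sub>m n"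
    using A unfolding minv_def by auto
  have "minv A = minv A * (A * B)" using X AB by simp
  also have "\<dots> = (minv A * A) * B" by (rule assoc_mult_mat[OF X(1) A B, symmetric])
  also have "\<dots> = B" using X B by simp
  finally show ?thesis .
qed

lemma inv_exists: assumes A: "(A::complex mat) \<in> carrier_mat n n"
  and ker: "\<And>v. v \<in> carrier_vec n \<Longrightarrow> A *\<^sub>v v = 0\<^sub>v n \<Longrightarrow> v = 0\<^sub>v n"
  shows "\<exists>B. B \<in> carrier_mat n n \<and> A * B = 1\<^sub>m n"
proof -
  have "det A \<noteq> 0" using det_0_iff_vec_prod_zero[OF A] ker by blast
  from det_non_zero_imp_unit[OF A this, of undefined]
  show ?thesis unfolding Units_def ring_mat_def by auto
qed

definition sel :: "nat \<Rightarrow> nat \<Rightarrow> nat \<Rightarrow> complex mat" where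
  "sel N k p = mat N k (\<lambda>(i,c). if i = p + c then 1 else 0)"

lemma sel_carrier[simp]: "sel N k p \<in> carrier_mat N k" by (simp add: sel_def)
lemma sel_dims[simp]: "dim_row (sel N k p) = N" "dim_col (sel N k p) = k" by (simp_all add: sel_def)

lemma col_sel: "c < k \<Longrightarrow> p + k \<le> N \<Longrightarrow> col (sel N k p) c = unit_vec N (p+c)"
  by (rule eq_vecI) (auto simp: sel_def unit_vec_def)

lemma row_adj_sel: "c < k \<Longrightarrow> p + k \<le> N \<Longrightarrow> row (mat_adjoint (sel N k p)) c = unit_vec N (p+c)"
  by (rule eq_vecI) (auto simp: sel_def unit_vec_def)

lemma mult_sel: assumes A: "A \<in> carrier_mat n N" and k: "p + k \<le> N"
  shows "A * sel N k p = mat n k (\<lambda>(r,c). A $$ (r, p+c))"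
  using A k by (intro eq_matI) (auto simp: col_sel)

lemma sel_mult: assumes A: "A \<in> carrier_mat N n" and k: "p + k \<le> N"
  shows "mat_adjoint (sel N k p) * A = mat k n (\<lambda>(r,c). A $$ (p+r, c))"
proof (intro eq_matI)
  fix r c assume "r < dim_row (mat k n (\<lambda>(r,c). A $$ (p+r, c)))" "c < dim_col (mat k n (\<lambda>(r,c). A $$ (p+r, c)))"
  then have rc: "r < k" "c < n" by auto
  have "col A c \<in> carrier_vec N" using A by auto
  then show "(mat_adjoint (sel N k p) * A) $$ (r, c) = mat k n (\<lambda>(r,c). A $$ (p+r, c)) $$ (r, c)"
    using rc A k by (simp add: row_adj_sel)
qed (use A in auto)

lemma ext_left: assumes N: "N = m + q" and A: "dim_row A = N" "dim_col A = k" and B: "dim_row B = N" "dim_col B = k"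
  and 1: "mat_adjoint (sel N m 0) * A = mat_adjoint (sel N m 0) * B"
  and 2: "mat_adjoint (sel N q m) * A = mat_adjoint (sel N q m) * B"
  shows "A = B"
proof (rule eq_matI)
  fix i c assume i: "i < dim_row B" and c: "c < dim_col B"
  show "A $$ (i,c) = B $$ (i,c)"
  proof (cases "i < m")
    case True
    have "(mat_adjoint (sel N m 0) * A) $$ (i,c) = (mat_adjoint (sel N m 0) * B) $$ (i,c)" using 1 by simp
    then show ?thesis using True i c A B N by (subst (asm) (1 2) sel_mult) (auto intro: carrier_matI)
  next
    case False
    have "(mat_adjoint (sel N q m) * A) $$ (i-m,c) = (mat_adjoint (sel N q m) * B) $$ (i-m,c)" using 2 by simp
    then show ?thesis using False i c A B N by (subst (asm) (1 2) sel_mult) (auto intro: carrier_matI)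
  qed
qed (use A B in auto)

lemma ext_right: assumes N: "N = m + q" and A: "dim_row A = k" "dim_col A = N" and B: "dim_row B = k" "dim_col B = N"
  and 1: "A * sel N m 0 = B * sel N m 0"
  and 2: "A * sel N q m = B * sel N q m"
  shows "A = B"
proof (rule eq_matI)
  fix i c assume i: "i < dim_row B" and c: "c < dim_col B"
  show "A $$ (i,c) = B $$ (i,c)"
  proof (cases "c < m")
    case True
    have "(A * sel N m 0) $$ (i,c) = (B * sel N m 0) $$ (i,c)" using 1 by simp
    then show ?thesis using True i c A B N by (subst (asm) (1 2) mult_sel) (auto intro: carrier_matI)
  next
    case False
    have "(A * sel N q m) $$ (i,c-m) = (B * sel N q m) $$ (i,c-m)" using 2 by simp
    then show ?thesis using False i c A B N by (subst (asm) (1 2) mult_sel) (auto intro: carrier_matI)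
  qed
qed (use A B in auto)

lemma sel_sel: assumes "p + k \<le> N" "p' + k' \<le> N"
  shows "mat_adjoint (sel N k p) * sel N k' p' = mat k k' (\<lambda>(r,c). if p + r = p' + c then 1 else 0)"
  using assms by (subst sel_mult) (auto simp: sel_def)

lemma EtE: "m \<le> N \<Longrightarrow> mat_adjoint (sel N m 0) * sel N m 0 = 1\<^sub>m m"
  by (subst sel_sel) (auto intro!: eq_matI)
lemma FtF: "m + q \<le> N \<Longrightarrow> mat_adjoint (sel N q m) * sel N q m = 1\<^sub>m q"
  by (subst sel_sel) (auto intro!: eq_matI)
lemma EtF: "m + q \<le> N \<Longrightarrow> mat_adjoint (sel N m 0) * sel N q m = 0\<^sub>m m q"
  by (subst sel_sel) (auto intro!: eq_matI)
lemma FtE: "m + q \<le> N \<Longrightarrow> mat_adjoint (sel N q m) * sel N m 0 = 0\<^sub>m q m"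
  by (subst sel_sel) (auto intro!: eq_matI)

lemma assoc_cancel: "A \<in> carrier_mat a b \<Longrightarrow> B \<in> carrier_mat b c \<Longrightarrow> Z \<in> carrier_mat c d \<Longrightarrow> A * B = C
   \<Longrightarrow> A * (B * Z) = C * Z"
  by (metis assoc_mult_mat)


declare assoc_mult_mat[simp del]

lemma M_assoc: "dim_col A = dim_row B \<Longrightarrow> dim_col B = dim_row C \<Longrightarrow> (A::complex mat) * B * C = A * (B * C)"
  by (rule assoc_mult_mat[of A "dim_row A" "dim_col A" B "dim_col B" C "dim_col C"]) auto
lemma M_addl: "dim_row A = dim_row B \<Longrightarrow> dim_col A = dim_col B \<Longrightarrow> dim_col A = dim_row C \<Longrightarrow> ((A::complex mat) + B) * C = A * C + B * C"
  by (rule add_mult_distrib_mat[of A "dim_row A" "dim_col A"]) auto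
lemma M_addr: "dim_row B = dim_row C \<Longrightarrow> dim_col B = dim_col C \<Longrightarrow> dim_col A = dim_row B \<Longrightarrow> (A::complex mat) * (B + C) = A * B + A * C"
  by (rule mult_add_distrib_mat[of A "dim_row A" "dim_col A"]) auto
lemma M_subl: "dim_row A = dim_row B \<Longrightarrow> dim_col A = dim_col B \<Longrightarrow> dim_col A = dim_row C \<Longrightarrow> ((A::complex mat) - B) * C = A * C - B * C"
  by (rule minus_mult_distrib_mat[of A "dim_row A" "dim_col A"]) auto
lemma M_subr: "dim_row B = dim_row C \<Longrightarrow> dim_col B = dim_col C \<Longrightarrow> dim_col A = dim_row B \<Longrightarrow> (A::complex mat) * (B - C) = A * B - A * C"
  by (rule mult_minus_distrib_mat[of A "dim_row A" "dim_col A"]) auto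
lemma M_uml: "dim_col A = dim_row B \<Longrightarrow> (- (A::complex mat)) * B = - (A * B)"
  by (rule uminus_mult_left_mat) auto
lemma M_umr: "dim_col A = dim_row B \<Longrightarrow> (A::complex mat) * (- B) = - (A * B)"
  by (rule uminus_mult_right_mat) auto
lemma M_sml: "dim_col A = dim_row B \<Longrightarrow> (c \<cdot>\<^sub>m (A::complex mat)) * B = c \<cdot>\<^sub>m (A * B)"
  by (rule mult_smult_assoc_mat[of A "dim_row A" "dim_col A"]) auto
lemma M_smr: "dim_col A = dim_row B \<Longrightarrow> (A::complex mat) * (c \<cdot>\<^sub>m B) = c \<cdot>\<^sub>m (A * B)"
  by (rule mult_smult_distrib[of A "dim_row A" "dim_col A"]) auto
lemma M_z1: "dim_row A = nr \<Longrightarrow> dim_col A = nc \<Longrightarrow> 0\<^sub>m nr nc + (A::complex mat) = A" by (intro eq_matI) auto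
lemma M_z2: "dim_row A = nr \<Longrightarrow> dim_col A = nc \<Longrightarrow> (A::complex mat) + 0\<^sub>m nr nc = A" by (intro eq_matI) auto
lemma M_z3: "dim_row A = nr \<Longrightarrow> dim_col A = nc \<Longrightarrow> (A::complex mat) - 0\<^sub>m nr nc = A" by (intro eq_matI) auto
lemma M_z4: "dim_row A = nr \<Longrightarrow> dim_col A = nc \<Longrightarrow> 0\<^sub>m nr nc - (A::complex mat) = - A" by (intro eq_matI) auto
lemma M_z5: "(A::complex mat) - A = 0\<^sub>m (dim_row A) (dim_col A)" by (intro eq_matI) auto
lemma M_z6: "- 0\<^sub>m nr nc = (0\<^sub>m nr nc :: complex mat)" by (intro eq_matI) auto
lemma M_z7: "0 \<cdot>\<^sub>m (A :: complex mat) = 0\<^sub>m (dim_row A) (dim_col A)" by (intro eq_matI) auto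
lemma M_z8: "c \<cdot>\<^sub>m (0\<^sub>m nr nc :: complex mat) = 0\<^sub>m nr nc" by (intro eq_matI) auto
lemmas M = M_assoc M_addl M_addr M_subl M_subr M_uml M_umr M_sml M_smr M_z1 M_z2 M_z3 M_z4 M_z5 M_z6 M_z7 M_z8

lemma block_basic:
  fixes H Hp Y S G :: "complex mat"
  assumes N: "N = m + q" and H: "H \<in> carrier_mat N N" and Hp: "Hp \<in> carrier_mat m m"
   and Y: "Y \<in> carrier_mat m q" and S: "S \<in> carrier_mat q q"
   and b1: "mat_adjoint (sel N m 0) * H * sel N m 0 = Hp"
   and b2: "mat_adjoint (sel N m 0) * H * sel N q m = Y"
   and b3: "mat_adjoint (sel N q m) * H * sel N m 0 = mat_adjoint Y"
   and b4: "mat_adjoint (sel N q m) * H * sel N q m = S"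
   and G: "G \<in> carrier_mat m m" and HpG: "Hp * G = 1\<^sub>m m"
  shows "mat_adjoint (sel N m 0) * H = Hp * mat_adjoint (sel N m 0) + Y * mat_adjoint (sel N q m)"
    and "mat_adjoint (sel N q m) * H = mat_adjoint Y * mat_adjoint (sel N m 0) + S * mat_adjoint (sel N q m)"
    and "H * (sel N q m - sel N m 0 * (G * Y)) = sel N q m * (S - mat_adjoint Y * (G * Y))"
proof -
  let ?E = "sel N m 0" and ?F = "sel N q m"
  have d[simp]: "dim_row H = N" "dim_col H = N" "dim_row Hp = m" "dim_col Hp = m" "dim_row Y = m" "dim_col Y = q"
    "dim_row S = q" "dim_col S = q" "dim_row G = m" "dim_col G = m" using H Hp Y S G by auto
  have r1'[simp]: "mat_adjoint ?E * ?E = 1\<^sub>m m" "mat_adjoint ?F * ?F = 1\<^sub>m q" 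
     "mat_adjoint ?E * ?F = 0\<^sub>m m q" "mat_adjoint ?F * ?E = 0\<^sub>m q m"
    using EtE FtF EtF FtE N by auto
  have r1[simp]: "dim_row Z = m \<Longrightarrow> mat_adjoint ?E * (?E * Z) = Z" for Z
    by (simp flip: M_assoc)
  have r2[simp]: "dim_row Z = q \<Longrightarrow> mat_adjoint ?F * (?F * Z) = Z" for Z
    by (simp flip: M_assoc)
  have r3[simp]: "dim_row Z = q \<Longrightarrow> mat_adjoint ?E * (?F * Z) = 0\<^sub>m m (dim_col Z)" for Z
    by (simp flip: M_assoc)
  have r4[simp]: "dim_row Z = m \<Longrightarrow> mat_adjoint ?F * (?E * Z) = 0\<^sub>m q (dim_col Z)" for Z
    by (simp flip: M_assoc)
  have r5[simp]: "dim_row Z = m \<Longrightarrow> Hp * (G * Z) = Z" for Z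
    by (simp add: HpG flip: M_assoc)
  have b1'[simp]: "mat_adjoint ?E * (H * ?E) = Hp" using b1 by (simp add: M)
  have b2'[simp]: "mat_adjoint ?E * (H * ?F) = Y" using b2 by (simp add: M)
  have b3'[simp]: "mat_adjoint ?F * (H * ?E) = mat_adjoint Y" using b3 by (simp add: M)
  have b4'[simp]: "mat_adjoint ?F * (H * ?F) = S" using b4 by (simp add: M)
  show EH: "mat_adjoint ?E * H = Hp * mat_adjoint ?E + Y * mat_adjoint ?F"
    by (rule ext_right[OF N]) (simp_all add: M)
  show FH: "mat_adjoint ?F * H = mat_adjoint Y * mat_adjoint ?E + S * mat_adjoint ?F"
    by (rule ext_right[OF N]) (simp_all add: M)
  have EH'[simp]: "dim_row Z = N \<Longrightarrow> mat_adjoint ?E * (H * Z) = Hp * (mat_adjoint ?E * Z) + Y * (mat_adjoint ?F * Z)" for Z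
  proof -
    assume "dim_row Z = N"
    then have "mat_adjoint ?E * (H * Z) = (mat_adjoint ?E * H) * Z" by (simp add: M_assoc)
    then show ?thesis using \<open>dim_row Z = N\<close> by (simp add: EH M)
  qed
  have FH'[simp]: "dim_row Z = N \<Longrightarrow> mat_adjoint ?F * (H * Z) = mat_adjoint Y * (mat_adjoint ?E * Z) + S * (mat_adjoint ?F * Z)" for Z
  proof -
    assume "dim_row Z = N"
    then have "mat_adjoint ?F * (H * Z) = (mat_adjoint ?F * H) * Z" by (simp add: M_assoc)
    then show ?thesis using \<open>dim_row Z = N\<close> by (simp add: FH M)
  qed
  show "H * (?F - ?E * (G * Y)) = ?F * (S - mat_adjoint Y * (G * Y))"
    by (rule ext_left[OF N]) (simp_all add: M)
qed


lemma block_inv: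
  fixes H Hp Y S G K Hh w wt :: "complex mat"
  assumes N: "N = m + q" and H: "H \<in> carrier_mat N N" and Hp: "Hp \<in> carrier_mat m m"
   and Y: "Y \<in> carrier_mat m q" and S: "S \<in> carrier_mat q q"
   and b1: "mat_adjoint (sel N m 0) * H * sel N m 0 = Hp"
   and b2: "mat_adjoint (sel N m 0) * H * sel N q m = Y"
   and b3: "mat_adjoint (sel N q m) * H * sel N m 0 = mat_adjoint Y"
   and b4: "mat_adjoint (sel N q m) * H * sel N q m = S"
   and G: "G \<in> carrier_mat m m" and HpG: "Hp * G = 1\<^sub>m m"
   and Hh: "Hh = S - mat_adjoint Y * (G * Y)" and K: "K \<in> carrier_mat q q" and HhK: "Hh * K = 1\<^sub>m q"
   and w: "w = sel N q m - sel N m 0 * (G * Y)"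
   and wt: "wt = mat_adjoint (sel N q m) - mat_adjoint Y * (G * mat_adjoint (sel N m 0))"
  shows "H * (sel N m 0 * (G * mat_adjoint (sel N m 0)) + w * (K * wt)) = 1\<^sub>m N"
proof -
  let ?E = "sel N m 0" and ?F = "sel N q m"
  note bb = block_basic[OF N H Hp Y S b1 b2 b3 b4 G HpG]
  have d[simp]: "dim_row H = N" "dim_col H = N" "dim_row Hp = m" "dim_col Hp = m" "dim_row Y = m" "dim_col Y = q"
    "dim_row S = q" "dim_col S = q" "dim_row G = m" "dim_col G = m" "dim_row K = q" "dim_col K = q"
    "dim_row Hh = q" "dim_col Hh = q" "dim_row w = N" "dim_col w = q" "dim_row wt = q" "dim_col wt = N"
    using H Hp Y S G K by (auto simp: Hh w wt)
  have r1'[simp]: "mat_adjoint ?E * ?E = 1\<^sub>m m" "mat_adjoint ?F * ?F = 1\<^sub>m q" 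
     "mat_adjoint ?E * ?F = 0\<^sub>m m q" "mat_adjoint ?F * ?E = 0\<^sub>m q m"
    using EtE FtF EtF FtE N by auto
  have r1[simp]: "dim_row Z = m \<Longrightarrow> mat_adjoint ?E * (?E * Z) = Z" for Z
    by (simp flip: M_assoc)
  have r2[simp]: "dim_row Z = q \<Longrightarrow> mat_adjoint ?F * (?F * Z) = Z" for Z
    by (simp flip: M_assoc)
  have r3[simp]: "dim_row Z = q \<Longrightarrow> mat_adjoint ?E * (?F * Z) = 0\<^sub>m m (dim_col Z)" for Z
    by (simp flip: M_assoc)
  have r4[simp]: "dim_row Z = m \<Longrightarrow> mat_adjoint ?F * (?E * Z) = 0\<^sub>m q (dim_col Z)" for Z
    by (simp flip: M_assoc)
  have r5[simp]: "dim_row Z = m \<Longrightarrow> Hp * (G * Z) = Z" for Z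
    by (simp add: HpG flip: M_assoc)
  have r6[simp]: "dim_row Z = q \<Longrightarrow> Hh * (K * Z) = Z" for Z
    by (simp add: HhK flip: M_assoc)
  have EH'[simp]: "dim_row Z = N \<Longrightarrow> mat_adjoint ?E * (H * Z) = Hp * (mat_adjoint ?E * Z) + Y * (mat_adjoint ?F * Z)" for Z
  proof -
    assume "dim_row Z = N"
    then have "mat_adjoint ?E * (H * Z) = (mat_adjoint ?E * H) * Z" by (simp add: M_assoc)
    then show ?thesis using \<open>dim_row Z = N\<close> by (simp add: bb(1) M)
  qed
  have FH'[simp]: "dim_row Z = N \<Longrightarrow> mat_adjoint ?F * (H * Z) = mat_adjoint Y * (mat_adjoint ?E * Z) + S * (mat_adjoint ?F * Z)" for Z
  proof -
    assume "dim_row Z = N"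
    then have "mat_adjoint ?F * (H * Z) = (mat_adjoint ?F * H) * Z" by (simp add: M_assoc)
    then show ?thesis using \<open>dim_row Z = N\<close> by (simp add: bb(2) M)
  qed
  have HA: "H * (?E * (G * mat_adjoint ?E)) = ?E * mat_adjoint ?E + ?F * (mat_adjoint Y * (G * mat_adjoint ?E))"
    by (rule ext_left[OF N]) (simp_all add: M)
  have Hw: "H * w = ?F * Hh" using bb(3) by (simp add: w Hh)
  have HB: "H * (w * (K * wt)) = ?F * wt"
  proof -
    have "H * (w * (K * wt)) = (H * w) * (K * wt)" by (simp add: M_assoc)
    also have "\<dots> = ?F * wt" by (simp add: Hw M_assoc)
    finally show ?thesis .
  qed
  show ?thesis
  proof (rule ext_left[OF N])
    show "mat_adjoint ?E * (H * (?E * (G * mat_adjoint ?E) + w * (K * wt))) = mat_adjoint ?E * 1\<^sub>m N"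
      by (simp add: M HA HB)
    have "mat_adjoint ?F * (H * (?E * (G * mat_adjoint ?E) + w * (K * wt))) = mat_adjoint Y * (G * mat_adjoint ?E) + wt"
      by (simp add: M HA HB)
    also have "\<dots> = mat_adjoint ?F" unfolding wt by (rule eq_matI) auto
    finally show "mat_adjoint ?F * (H * (?E * (G * mat_adjoint ?E) + w * (K * wt))) = mat_adjoint ?F * 1\<^sub>m N"
      by simp
  qed simp_all
qed




lemma block_mat_dims[simp]: "dim_row (block_mat q m k f) = m * q" "dim_col (block_mat q m k f) = k * q"
  by (auto simp: block_mat_def)

lemma block_mat_index: "r < m * q \<Longrightarrow> c < k * q \<Longrightarrow>
  block_mat q m k f $$ (r,c) = f (r div q) (c div q) $$ (r mod q, c mod q)"
  by (auto simp: block_mat_def)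

lemma sel_multv: assumes "v \<in> carrier_vec n" "n \<le> N"
  shows "mat_adjoint (sel N n 0) *\<^sub>v (sel N n 0 *\<^sub>v v) = v"
proof -
  have "mat_adjoint (sel N n 0) *\<^sub>v (sel N n 0 *\<^sub>v v) = (mat_adjoint (sel N n 0) * sel N n 0) *\<^sub>v v"
    using assms by (subst assoc_mult_mat_vec[of _ n N _ n]) auto
  also have "\<dots> = v" using assms by (simp add: EtE)
  finally show ?thesis .
qed

lemma conj_adj_vec: assumes B: "(B::complex mat) \<in> carrier_mat n k" and v: "v \<in> carrier_vec k" and x: "x \<in> carrier_vec n"
  shows "conjugate (B *\<^sub>v v) \<bullet> x = conjugate v \<bullet> (mat_adjoint B *\<^sub>v x)"
proof -
  have "conjugate (B *\<^sub>v v) \<bullet> x = (\<Sum>i<n. (\<Sum>l<k. cnj (B $$ (i,l)) * cnj (v $ l)) * x $ i)"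
    using B v x by (auto simp: scalar_prod_def mult_mat_vec_def row_def lessThan_atLeast0 intro!: sum.cong)
  also have "\<dots> = (\<Sum>l<k. cnj (v $ l) * (\<Sum>i<n. cnj (B $$ (i,l)) * x $ i))"
    by (simp add: sum_distrib_left sum_distrib_right sum.swap[of _ "{..<n}"] mult_ac)
  also have "\<dots> = conjugate v \<bullet> (mat_adjoint B *\<^sub>v x)"
    using B v x by (auto simp: scalar_prod_def mult_mat_vec_def row_def lessThan_atLeast0 intro!: sum.cong)
  finally show ?thesis .
qed

lemma pd_kernel: assumes pd: "pos_def A" and A: "A \<in> carrier_mat N N" and nN: "n \<le> N"
  and v: "v \<in> carrier_vec n" and Hv: "(mat_adjoint (sel N n 0) * A * sel N n 0) *\<^sub>v v = 0\<^sub>v n"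
  shows "v = 0\<^sub>v n"
proof (rule ccontr)
  assume nz: "v \<noteq> 0\<^sub>v n"
  let ?E = "sel N n 0"
  let ?y = "?E *\<^sub>v v"
  have y: "?y \<in> carrier_vec N" by (rule mult_mat_vec_carrier[OF sel_carrier v])
  have ynz: "?y \<noteq> 0\<^sub>v N"
  proof
    assume "?y = 0\<^sub>v N"
    then have "mat_adjoint ?E *\<^sub>v ?y = 0\<^sub>v n" by auto
    then show False using sel_multv[OF v nN] nz by simp
  qed
  have "(mat_adjoint ?E * A * ?E) *\<^sub>v v = mat_adjoint ?E *\<^sub>v (A *\<^sub>v ?y)"
  proof -
    have c1: "mat_adjoint ?E * A \<in> carrier_mat n N" using A by (intro mult_carrier_mat[of _ n N]) auto
    have "(mat_adjoint ?E * A * ?E) *\<^sub>v v = (mat_adjoint ?E * A) *\<^sub>v ?y"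
      by (rule assoc_mult_mat_vec[OF c1 sel_carrier v])
    also have "\<dots> = mat_adjoint ?E *\<^sub>v (A *\<^sub>v ?y)"
      by (rule assoc_mult_mat_vec[OF _ A y]) auto
    finally show ?thesis .
  qed
  then have 0: "mat_adjoint ?E *\<^sub>v (A *\<^sub>v ?y) = 0\<^sub>v n" using Hv by simp
  have "conjugate ?y \<bullet> (A *\<^sub>v ?y) = conjugate v \<bullet> (mat_adjoint ?E *\<^sub>v (A *\<^sub>v ?y))"
    by (rule conj_adj_vec[OF sel_carrier v mult_mat_vec_carrier[OF A y]])
  also have "\<dots> = 0" using 0 v by simp
  finally have "conjugate ?y \<bullet> (A *\<^sub>v ?y) = 0" .
  moreover have "Re (conjugate ?y \<bullet> (A *\<^sub>v ?y)) > 0" using pd ynz A y unfolding pos_def_def by (auto dest!: bspec[of _ _ ?y])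
  ultimately show False by simp
qed

lemma hcat_split: assumes N: "N = m + q" and A: "A \<in> carrier_mat k m" and B: "B \<in> carrier_mat k q"
  shows "hcat A B = A * mat_adjoint (sel N m 0) + B * mat_adjoint (sel N q m)"
proof -
  have d[simp]: "dim_row A = k" "dim_col A = m" "dim_row B = k" "dim_col B = q" using A B by auto
  have hd[simp]: "dim_row (hcat A B) = k" "dim_col (hcat A B) = N" using N by (auto simp: hcat_def)
  have r1'[simp]: "mat_adjoint (sel N m 0) * (sel N m 0) = 1\<^sub>m m" "mat_adjoint (sel N q m) * (sel N q m) = 1\<^sub>m q" 
     "mat_adjoint (sel N m 0) * (sel N q m) = 0\<^sub>m m q" "mat_adjoint (sel N q m) * (sel N m 0) = 0\<^sub>m q m"
    using EtE FtF EtF FtE N by auto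
  show ?thesis
  proof (rule ext_right[OF N])
    have "hcat A B * sel N m 0 = A"
      by (subst mult_sel[of _ k N]) (auto simp: N hcat_def intro!: eq_matI carrier_matI)
    then show "hcat A B * sel N m 0 = (A * mat_adjoint (sel N m 0) + B * mat_adjoint (sel N q m)) * sel N m 0"
      by (simp add: M)
    have "hcat A B * sel N q m = B"
      by (subst mult_sel[of _ k N]) (auto simp: N hcat_def intro!: eq_matI carrier_matI)
    then show "hcat A B * sel N q m = (A * mat_adjoint (sel N m 0) + B * mat_adjoint (sel N q m)) * sel N q m"
      by (simp add: M)
  qed simp_all
qed

lemma sandwich: assumes A: "A \<in> carrier_mat N N'" and "p + k \<le> N" "p' + k' \<le> N'"
  shows "mat_adjoint (sel N k p) * A * sel N' k' p' = mat k k' (\<lambda>(r,c). A $$ (p+r, p'+c))"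
proof -
  have "mat_adjoint (sel N k p) * A = mat k N' (\<lambda>(r,c). A $$ (p+r, c))" by (rule sel_mult[OF A assms(2)])
  moreover have "mat k N' (\<lambda>(r,c). A $$ (p+r, c)) * sel N' k' p' = mat k k' (\<lambda>(r,c). A $$ (p+r, p'+c))"
    by (subst mult_sel[of _ k N']) (use assms in auto)
  ultimately show ?thesis by simp
qed

abbreviation "Em q j \<equiv> sel ((j+1)*q) (j*q) 0"
abbreviation "Fm q j \<equiv> sel ((j+1)*q) q (j*q)"

lemma divmod_aux: "c < (q::nat) \<Longrightarrow> (j*q + c) div q = j" "c < (q::nat) \<Longrightarrow> (j*q + c) mod q = c"
  by (auto simp: add.commute)

lemma mat_vec_zero: "A *\<^sub>v 0\<^sub>v (dim_col A) = 0\<^sub>v (dim_row A)"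
  by (intro eq_vecI) (auto intro: scalar_prod_right_zero[of _ "dim_col A"])

lemma M_neg_add: "dim_row A = dim_row B \<Longrightarrow> dim_col A = dim_col B \<Longrightarrow> - (A::complex mat) + B = B - A"
  by (intro eq_matI) auto

lemma hermitian_adj: "hermitian A \<Longrightarrow> mat_adjoint A = A" by (simp add: hermitian_def)

context
  fixes q n :: nat and a b :: real and s :: "nat \<Rightarrow> complex mat"
  assumes q: "q \<ge> 1" and s_dim: "\<And>k. k \<le> 2*n+1 \<Longrightarrow> s k \<in> carrier_mat q q"
    and s_herm: "\<And>k. k \<le> 2*n+1 \<Longrightarrow> hermitian (s k)"
begin

lemma shat_carrier: "k + 1 \<le> 2*n \<Longrightarrow> shat a b s k \<in> carrier_mat q q"
  using s_dim[of k] s_dim[of "k+1"] s_dim[of "k+2"] unfolding shat_def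
  by (intro minus_carrier_mat add_carrier_mat smult_carrier_mat) auto

lemma shat_adj: assumes k: "k + 1 \<le> 2*n" shows "mat_adjoint (shat a b s k) = shat a b s k"
proof -
  have c: "s k \<in> carrier_mat q q" "s (k+1) \<in> carrier_mat q q" "s (k+2) \<in> carrier_mat q q" using s_dim k by auto
  have h: "mat_adjoint (s k) = s k" "mat_adjoint (s (k+1)) = s (k+1)" "mat_adjoint (s (k+2)) = s (k+2)"
    using s_herm k hermitian_adj by auto
  show ?thesis unfolding shat_def using c
    by (simp add: adj_minus[of _ q q] adj_add[of _ q q] adj_smult h[simplified])
qed

lemma shat_conj: "k + 1 \<le> 2*n \<Longrightarrow> x < q \<Longrightarrow> y < q \<Longrightarrow> cnj (shat a b s k $$ (x,y)) = shat a b s k $$ (y,x)"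
  using shat_adj[of k] shat_carrier[of k] adj_index[of y "shat a b s k" x]
  by auto

lemma H2_index: "r < (j+1)*q \<Longrightarrow> c < (j+1)*q \<Longrightarrow>
  H2 q a b s j $$ (r,c) = shat a b s (r div q + c div q) $$ (r mod q, c mod q)"
  unfolding H2_def by (simp add: block_mat_index)

lemma H2_index2: "r < q + j*q \<Longrightarrow> c < q + j*q \<Longrightarrow>
  H2 q a b s j $$ (r,c) = shat a b s (r div q + c div q) $$ (r mod q, c mod q)"
  using H2_index[of r j c] by (simp add: algebra_simps)

lemma H2_carrier: "H2 q a b s j \<in> carrier_mat ((j+1)*q) ((j+1)*q)"
  unfolding H2_def by (auto simp: block_mat_def)

lemma H2_sub: assumes "j \<le> j'"
  shows "mat_adjoint (sel ((j'+1)*q) ((j+1)*q) 0) * H2 q a b s j' * sel ((j'+1)*q) ((j+1)*q) 0 = H2 q a b s j"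
proof -
  have le: "(j+1)*q \<le> (j'+1)*q" using assms by simp
  have le2: "j*q \<le> j'*q" by (rule mult_le_mono1[OF assms])
  have lt: "r < q + j*q \<Longrightarrow> r < q + j'*q" for r using le2 by linarith
  show ?thesis
    apply (subst sandwich[OF H2_carrier]) using le apply simp using le apply simp
    apply (rule eq_matI) using H2_carrier[of j] by (auto simp: H2_index2 lt)
qed

lemma Y2_index: "r < j*q \<Longrightarrow> c < q \<Longrightarrow> Y2 q a b s j $$ (r,c) = shat a b s (j + r div q) $$ (r mod q, c)"
  unfolding Y2_def block_col_def by (simp add: block_mat_index)

lemma Y2_carrier: "Y2 q a b s j \<in> carrier_mat (j*q) q"
  unfolding Y2_def block_col_def by (auto simp: block_mat_def)

context
  fixes j assumes j1: "1 \<le> j" and jn: "j \<le> n - 1"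
begin

lemma b1: "mat_adjoint (sel ((j+1)*q) (j*q) 0) * H2 q a b s j * sel ((j+1)*q) (j*q) 0 = H2 q a b s (j-1)"
  using H2_sub[of "j-1" j] j1 by simp

lemma b2: "mat_adjoint (sel ((j+1)*q) (j*q) 0) * H2 q a b s j * sel ((j+1)*q) q (j*q) = Y2 q a b s j"
proof -
  have "r < j*q \<Longrightarrow> r < q + j*q" for r by simp
  moreover have "c < q \<Longrightarrow> j*q + c < q + j*q" for c by simp
  ultimately show ?thesis
    apply (subst sandwich[OF H2_carrier]) apply simp apply simp
    apply (rule eq_matI) using Y2_carrier[of j] by (auto simp: H2_index2 Y2_index divmod_aux ac_simps)
qed

lemma b3: "mat_adjoint (sel ((j+1)*q) q (j*q)) * H2 q a b s j * sel ((j+1)*q) (j*q) 0 = mat_adjoint (Y2 q a b s j)"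
proof -
  have Yc: "Y2 q a b s j \<in> carrier_mat (j*q) q" by (rule Y2_carrier)
  have e: "mat q (j*q) (\<lambda>(r,c). H2 q a b s j $$ (j*q + r, 0 + c)) = mat_adjoint (Y2 q a b s j)"
  proof (rule eq_matI)
    fix r c assume "r < dim_row (mat_adjoint (Y2 q a b s j))" "c < dim_col (mat_adjoint (Y2 q a b s j))"
    then have rc: "r < q" "c < j*q" using Yc by auto
    have cd: "c div q < j" using rc(2) by (simp add: less_mult_imp_div_less)
    have cm: "c mod q < q" using q by simp
    have i1: "j*q + r < (j+1)*q" "c < (j+1)*q" using rc by auto
    have "H2 q a b s j $$ (j*q + r, 0 + c) = shat a b s (j + c div q) $$ (r, c mod q)"
      using H2_index[OF i1] rc by (simp add: divmod_aux)
    also have "\<dots> = cnj (shat a b s (j + c div q) $$ (c mod q, r))"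
      using shat_conj[of "j + c div q" "c mod q" r] cd jn rc cm by auto
    also have "\<dots> = mat_adjoint (Y2 q a b s j) $$ (r,c)"
      using rc Yc by (simp add: Y2_index)
    finally show "mat q (j*q) (\<lambda>(r,c). H2 q a b s j $$ (j*q + r, 0 + c)) $$ (r, c) = mat_adjoint (Y2 q a b s j) $$ (r, c)"
      using rc by simp
  qed (use Yc in auto)
  show ?thesis by (subst sandwich[OF H2_carrier]) (auto simp: e[simplified])
qed

lemma b4: "mat_adjoint (sel ((j+1)*q) q (j*q)) * H2 q a b s j * sel ((j+1)*q) q (j*q) = shat a b s (2*j)"
proof -
  have Sc: "shat a b s (2*j) \<in> carrier_mat q q" using shat_carrier[of "2*j"] jn j1 by auto
  have e: "mat q q (\<lambda>(r,c). H2 q a b s j $$ (j*q + r, j*q + c)) = shat a b s (2*j)"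
  proof (rule eq_matI)
    fix r c assume "r < dim_row (shat a b s (2*j))" "c < dim_col (shat a b s (2*j))"
    then have rc: "r < q" "c < q" using Sc by auto
    have i1: "j*q + r < (j+1)*q" "j*q + c < (j+1)*q" using rc by auto
    show "mat q q (\<lambda>(r,c). H2 q a b s j $$ (j*q + r, j*q + c)) $$ (r, c) = shat a b s (2*j) $$ (r, c)"
      using H2_index[OF i1] rc by (simp add: divmod_aux mult_2)
  qed (use Sc in auto)
  show ?thesis by (subst sandwich[OF H2_carrier]) (auto simp: e)
qed

end

context assumes pd2: "pos_def (H2 q a b s (n-1))" and n1: "n \<ge> 1"
begin

lemma H2_sub': assumes "j' \<le> n - 1"
  shows "mat_adjoint (sel (n*q) ((j'+1)*q) 0) * H2 q a b s (n-1) * sel (n*q) ((j'+1)*q) 0 = H2 q a b s j'"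
  using H2_sub[OF assms] n1 by simp

lemma H2_kernel: assumes j': "j' \<le> n - 1" and v: "v \<in> carrier_vec ((j'+1)*q)"
  and Hv: "H2 q a b s j' *\<^sub>v v = 0\<^sub>v ((j'+1)*q)" shows "v = 0\<^sub>v ((j'+1)*q)"
proof -
  have n: "n \<ge> 1" using n1 .
  have le: "(j'+1)*q \<le> n*q" using j' n by (intro mult_le_mono1) auto
  have Hc: "H2 q a b s (n-1) \<in> carrier_mat (n*q) (n*q)" using H2_carrier[of "n-1"] n by simp
  show ?thesis by (rule pd_kernel[OF pd2 Hc le v]) (subst H2_sub'[OF j'], rule Hv)
qed

lemma H2_inv: assumes j': "j' \<le> n - 1"
  shows "minv (H2 q a b s j') \<in> carrier_mat ((j'+1)*q) ((j'+1)*q)" "H2 q a b s j' * minv (H2 q a b s j') = 1\<^sub>m ((j'+1)*q)"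
proof -
  obtain B where B: "B \<in> carrier_mat ((j'+1)*q) ((j'+1)*q)" "H2 q a b s j' * B = 1\<^sub>m ((j'+1)*q)"
    using inv_exists[OF H2_carrier] H2_kernel[OF j'] by blast
  have "minv (H2 q a b s j') = B" by (rule minv_unique[OF H2_carrier B])
  then show "minv (H2 q a b s j') \<in> carrier_mat ((j'+1)*q) ((j'+1)*q)" "H2 q a b s j' * minv (H2 q a b s j') = 1\<^sub>m ((j'+1)*q)"
    using B by auto
qed

lemma H2_herm: assumes j': "j' \<le> n - 1" shows "mat_adjoint (H2 q a b s j') = H2 q a b s j'"
proof -
  have n: "n \<ge> 1" using n1 .
  have Hc: "H2 q a b s (n-1) \<in> carrier_mat (n*q) (n*q)" using H2_carrier[of "n-1"] n by simp
  have Ha: "mat_adjoint (H2 q a b s (n-1)) = H2 q a b s (n-1)" using pd2 by (simp add: pos_def_def hermitian_def)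
  let ?E = "sel (n*q) ((j'+1)*q) 0"
  have c1: "mat_adjoint ?E * H2 q a b s (n-1) \<in> carrier_mat ((j'+1)*q) (n*q)" using Hc by (intro mult_carrier_mat[of _ _ "n*q"]) auto
  have "mat_adjoint (mat_adjoint ?E * H2 q a b s (n-1) * ?E) = mat_adjoint ?E * mat_adjoint (mat_adjoint ?E * H2 q a b s (n-1))"
    by (rule adj_mult[OF c1 sel_carrier])
  also have "\<dots> = mat_adjoint ?E * (H2 q a b s (n-1) * ?E)"
    by (subst adj_mult[of _ _ "n*q" _ "n*q"]) (use Hc Ha in auto)
  also have "\<dots> = mat_adjoint ?E * H2 q a b s (n-1) * ?E" using Hc by (simp add: M_assoc)
  finally show ?thesis using H2_sub'[OF j'] by simp
qed

lemma G_herm: assumes j': "j' \<le> n - 1" shows "mat_adjoint (minv (H2 q a b s j')) = minv (H2 q a b s j')"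
proof -
  let ?H = "H2 q a b s j'" and ?G = "minv (H2 q a b s j')" and ?N = "(j'+1)*q"
  have G: "?G \<in> carrier_mat ?N ?N" "?H * ?G = 1\<^sub>m ?N" using H2_inv[OF j'] by auto
  have GH: "?G * ?H = 1\<^sub>m ?N" by (rule mat_mult_left_right_inverse[OF H2_carrier G])
  have "?H * mat_adjoint ?G = mat_adjoint (?G * ?H)" using adj_mult[OF G(1) H2_carrier] H2_herm[OF j'] by simp
  also have "\<dots> = 1\<^sub>m ?N" using GH by simp
  finally have "minv ?H = mat_adjoint ?G" using minv_unique[OF H2_carrier] G by (metis adj_carrier)
  then show ?thesis by simp
qed


context fixes j assumes j1: "1 \<le> j" and jn: "j \<le> n - 1"
begin

abbreviation "G \<equiv> minv (H2 q a b s (j-1))"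
abbreviation "Y \<equiv> Y2 q a b s j"

lemma Nsplit: "(j+1)*q = j*q + q" by simp

lemma Gc: "G \<in> carrier_mat (j*q) (j*q)" and HG: "H2 q a b s (j-1) * G = 1\<^sub>m (j*q)"
  using H2_inv[of "j-1"] jn j1 by auto

lemma Sc: "shat a b s (2*j) \<in> carrier_mat q q" using shat_carrier[of "2*j"] jn j1 by auto

lemma Hc': "H2 q a b s (j-1) \<in> carrier_mat (j*q) (j*q)" using H2_carrier[of "j-1"] j1 by simp

lemmas bb = block_basic[OF Nsplit H2_carrier Hc' Y2_carrier Sc b1[OF j1 jn] b2[OF j1 jn] b3[OF j1 jn] b4[OF j1 jn] Gc HG]

lemma Hh_eq: "Hhat2 q a b s j = shat a b s (2*j) - mat_adjoint Y * (G * Y)"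
  using j1 Gc Y2_carrier[of j] by (auto simp: Hhat2_def M_assoc)

lemma Hh_kernel: assumes v: "v \<in> carrier_vec q" and Hv: "Hhat2 q a b s j *\<^sub>v v = 0\<^sub>v q" shows "v = 0\<^sub>v q"
proof -
  let ?w = "Fm q j - Em q j * (G * Y)"
  let ?Hh = "shat a b s (2*j) - mat_adjoint Y * (G * Y)"
  have wc: "?w \<in> carrier_mat ((j+1)*q) q" using Gc Y2_carrier[of j]
    by (intro minus_carrier_mat mult_carrier_mat[of _ _ "j*q"]) auto
  have Hhc: "?Hh \<in> carrier_mat q q" using Gc Y2_carrier[of j] Sc
    by (intro minus_carrier_mat mult_carrier_mat[of _ _ "j*q"]) auto
  have "H2 q a b s j *\<^sub>v (?w *\<^sub>v v) = (H2 q a b s j * ?w) *\<^sub>v v"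
    using wc v H2_carrier[of j] by (simp add: assoc_mult_mat_vec)
  also have "\<dots> = (Fm q j * ?Hh) *\<^sub>v v" using bb(3) by simp
  also have "\<dots> = Fm q j *\<^sub>v (?Hh *\<^sub>v v)" by (rule assoc_mult_mat_vec[OF sel_carrier Hhc v])
  also have "\<dots> = 0\<^sub>v ((j+1)*q)" using Hv Hh_eq mat_vec_zero[of "Fm q j"] by simp
  finally have eq0: "H2 q a b s j *\<^sub>v (?w *\<^sub>v v) = 0\<^sub>v ((j+1)*q)" .
  have "?w *\<^sub>v v = 0\<^sub>v ((j+1)*q)" by (rule H2_kernel[OF jn mult_mat_vec_carrier[OF wc v] eq0])
  then have "mat_adjoint (Fm q j) *\<^sub>v (?w *\<^sub>v v) = 0\<^sub>v q" using mat_vec_zero[of "mat_adjoint (Fm q j)"] by simp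
  moreover have "mat_adjoint (Fm q j) *\<^sub>v (?w *\<^sub>v v) = (mat_adjoint (Fm q j) * ?w) *\<^sub>v v"
    by (rule assoc_mult_mat_vec[OF adj_carrier[OF sel_carrier] wc v, symmetric])
  moreover have "mat_adjoint (Fm q j) * ?w = 1\<^sub>m q"
  proof -
    have d: "dim_row G = j*q" "dim_col G = j*q" "dim_row Y = j*q" "dim_col Y = q" using Gc Y2_carrier[of j] by auto
    have e: "mat_adjoint (Fm q j) * Fm q j = 1\<^sub>m q" "mat_adjoint (Fm q j) * Em q j = 0\<^sub>m q (j*q)"
      using FtF[of "j*q" q "(j+1)*q"] FtE[of "j*q" q "(j+1)*q"] by auto
    show ?thesis using d by (simp add: M e[simplified] flip: M_assoc)
  qed
  ultimately show ?thesis using v by simp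
qed


abbreviation "K \<equiv> minv (Hhat2 q a b s j)"

lemma Hhc: "Hhat2 q a b s j \<in> carrier_mat q q"
  unfolding Hh_eq using Gc Y2_carrier[of j] Sc
  by (intro minus_carrier_mat mult_carrier_mat[of _ _ "j*q"]) auto

lemma Kc: "K \<in> carrier_mat q q" and HK: "Hhat2 q a b s j * K = 1\<^sub>m q"
proof -
  obtain B where B: "B \<in> carrier_mat q q" "Hhat2 q a b s j * B = 1\<^sub>m q"
    using inv_exists[OF Hhc] Hh_kernel by blast
  have "K = B" by (rule minv_unique[OF Hhc B])
  then show "K \<in> carrier_mat q q" "Hhat2 q a b s j * K = 1\<^sub>m q" using B by auto
qed

lemma rowP_eq: "rowP q a b s j = mat_adjoint (Fm q j) - mat_adjoint Y * (G * mat_adjoint (Em q j))"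
proof -
  have d: "dim_row G = j*q" "dim_col G = j*q" "dim_row Y = j*q" "dim_col Y = q" using Gc Y2_carrier[of j] by auto
  have c: "- (mat_adjoint Y * G) \<in> carrier_mat q (j*q)" using d by (intro carrier_matI) simp_all
  show ?thesis unfolding rowP_def
    by (subst hcat_split[OF Nsplit c one_carrier_mat]) (use d in \<open>simp add: M M_neg_add\<close>)
qed

lemma adj_rowP: "mat_adjoint (rowP q a b s j) = Fm q j - Em q j * (G * Y)"
proof -
  have d: "dim_row G = j*q" "dim_col G = j*q" "dim_row Y = j*q" "dim_col Y = q" using Gc Y2_carrier[of j] by auto
  have "mat_adjoint (mat_adjoint Y * (G * mat_adjoint (Em q j))) = Em q j * (G * Y)"
  proof -
    have c1: "mat_adjoint Y \<in> carrier_mat q (j*q)" using Y2_carrier[of j] by simp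
    have c2: "G * mat_adjoint (Em q j) \<in> carrier_mat (j*q) ((j+1)*q)" using Gc by (intro mult_carrier_mat[OF Gc]) simp
    have "mat_adjoint (mat_adjoint Y * (G * mat_adjoint (Em q j))) = mat_adjoint (G * mat_adjoint (Em q j)) * Y"
      using adj_mult[OF c1 c2] by simp
    also have "mat_adjoint (G * mat_adjoint (Em q j)) = Em q j * G"
      using adj_mult[OF Gc adj_carrier[OF sel_carrier]] G_herm[of "j-1"] jn by simp
    finally show ?thesis using d by (simp add: M_assoc)
  qed
  then show ?thesis unfolding rowP_eq using d
    by (subst adj_minus[of _ q "(j+1)*q"]) (auto intro: carrier_matI)
qed

lemma Hinv: "minv (H2 q a b s j) = Em q j * (G * mat_adjoint (Em q j)) + mat_adjoint (rowP q a b s j) * (K * rowP q a b s j)"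
proof (rule minv_unique[OF H2_carrier])
  show "H2 q a b s j * (Em q j * (G * mat_adjoint (Em q j)) + mat_adjoint (rowP q a b s j) * (K * rowP q a b s j)) = 1\<^sub>m ((j + 1) * q)"
    by (rule block_inv[OF Nsplit H2_carrier Hc' Y2_carrier Sc b1[OF j1 jn] b2[OF j1 jn] b3[OF j1 jn] b4[OF j1 jn] Gc HG Hh_eq Kc HK adj_rowP rowP_eq])
  have d: "dim_row G = j*q" "dim_col G = j*q" "dim_row Y = j*q" "dim_col Y = q" "dim_row K = q" "dim_col K = q"
    using Gc Y2_carrier[of j] Kc by auto
  show "Em q j * (G * mat_adjoint (Em q j)) + mat_adjoint (rowP q a b s j) * (K * rowP q a b s j) \<in> carrier_mat ((j + 1) * q) ((j + 1) * q)"
    using d by (intro carrier_matI) (simp_all add: adj_rowP rowP_eq)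
qed

end

end
end




lemma T_index: assumes q: "q \<ge> 1" and rc: "r < (j+1)*q" "c < (j+1)*q"
  shows "Tm q j $$ (r,c) = (if r div q = c div q + 1 \<and> r mod q = c mod q then 1 else 0)"
proof -
  have "r mod q < q" "c mod q < q" using q by auto
  then show ?thesis unfolding Tm_def using rc by (simp add: block_mat_index)
qed

lemma T_carrier: "Tm q j \<in> carrier_mat ((j+1)*q) ((j+1)*q)" unfolding Tm_def by (auto simp: block_mat_def)

definition Mm :: "nat \<Rightarrow> nat \<Rightarrow> complex \<Rightarrow> complex mat" where
  "Mm q j z = 1\<^sub>m ((j+1)*q) - z \<cdot>\<^sub>m Tm q j"

lemma Mm_carrier: "Mm q j z \<in> carrier_mat ((j+1)*q) ((j+1)*q)"
  unfolding Mm_def by (rule minus_carrier_mat[OF smult_carrier_mat[OF T_carrier]])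

lemma Mm_index: assumes q: "q \<ge> 1" and rc: "r < (j+1)*q" "c < (j+1)*q"
  shows "Mm q j z $$ (r,c) = (if r = c then 1 else 0) - z * (if r div q = c div q + 1 \<and> r mod q = c mod q then 1 else 0)"
  unfolding Mm_def using rc T_carrier[of q j] T_index[OF q rc] by simp

lemma Mm_upper: assumes q: "q \<ge> 1" and rc: "r \<le> c" "c < (j+1)*q"
  shows "Mm q j z $$ (r,c) = (if r = c then 1 else 0)"
proof -
  have "r div q \<le> c div q" using rc by (simp add: div_le_mono)
  then show ?thesis using Mm_index[OF q] rc by auto
qed

lemma Mm_det: assumes q: "q \<ge> 1" shows "det (Mm q j z) = 1"
proof -
  have "det (Mm q j z) = prod_list (diag_mat (Mm q j z))"
    by (rule det_lower_triangular[OF _ Mm_carrier]) (use Mm_upper[OF q] in auto)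
  also have "\<dots> = (\<Prod>i = 0..<(j+1)*q. Mm q j z $$ (i,i))"
    using Mm_carrier[of q j z] by (simp add: prod_list_diag_prod)
  also have "\<dots> = 1" by (rule prod.neutral) (use Mm_upper[OF q] in auto)
  finally show ?thesis .
qed

lemma Rm_inv: assumes q: "q \<ge> 1"
  shows "Rm q j z \<in> carrier_mat ((j+1)*q) ((j+1)*q)" "Mm q j z * Rm q j z = 1\<^sub>m ((j+1)*q)"
    "Rm q j z * Mm q j z = 1\<^sub>m ((j+1)*q)"
proof -
  have "Mm q j z \<in> Units (ring_mat TYPE(complex) ((j+1)*q) undefined)"
    by (rule det_non_zero_imp_unit[OF Mm_carrier]) (simp add: Mm_det[OF q])
  then obtain B where B: "B \<in> carrier_mat ((j+1)*q) ((j+1)*q)" "Mm q j z * B = 1\<^sub>m ((j+1)*q)"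
    unfolding Units_def ring_mat_def by auto
  have R: "Rm q j z = B" unfolding Rm_def Mm_def[symmetric] by (rule minv_unique[OF Mm_carrier B])
  show "Rm q j z \<in> carrier_mat ((j+1)*q) ((j+1)*q)" "Mm q j z * Rm q j z = 1\<^sub>m ((j+1)*q)"
    using R B by auto
  show "Rm q j z * Mm q j z = 1\<^sub>m ((j+1)*q)"
    using R B mat_mult_left_right_inverse[OF Mm_carrier B] by auto
qed

lemma mult_adj_sel: assumes A: "A \<in> carrier_mat n k" and k: "k \<le> N"
  shows "A * mat_adjoint (sel N k 0) = mat n N (\<lambda>(r,c). if c < k then A $$ (r,c) else 0)"
proof (rule eq_matI)
  fix r c assume "r < dim_row (mat n N (\<lambda>(r,c). if c < k then A $$ (r,c) else 0))"
    "c < dim_col (mat n N (\<lambda>(r,c). if c < k then A $$ (r,c) else 0))"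
  then have rc: "r < n" "c < N" by auto
  have col: "col (mat_adjoint (sel N k 0)) c = (if c < k then unit_vec k c else 0\<^sub>v k)"
    using rc by (auto intro!: eq_vecI simp: sel_def unit_vec_def)
  have rA: "row A r \<in> carrier_vec k" using A by auto
  show "(A * mat_adjoint (sel N k 0)) $$ (r, c) = mat n N (\<lambda>(r,c). if c < k then A $$ (r,c) else 0) $$ (r, c)"
    using rc A rA by (simp add: col)
qed (use A in auto)

lemma EM: assumes q: "q \<ge> 1" and j: "j \<ge> 1"
  shows "mat_adjoint (Em q j) * Mm q j z = Mm q (j-1) z * mat_adjoint (Em q j)"
proof -
  obtain i where ji: "j = Suc i" using j by (cases j) auto
  have Mc: "Mm q i z \<in> carrier_mat (j*q) (j*q)" using Mm_carrier[of q i z] ji by simp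
  have "mat_adjoint (Em q j) * Mm q j z = mat (j*q) ((j+1)*q) (\<lambda>(r,c). Mm q j z $$ (0+r, c))"
    by (rule sel_mult[OF Mm_carrier]) simp
  also have "\<dots> = mat (j*q) ((j+1)*q) (\<lambda>(r,c). if c < j*q then Mm q i z $$ (r,c) else 0)"
  proof (rule eq_matI)
    fix r c assume "r < dim_row (mat (j*q) ((j+1)*q) (\<lambda>(r,c). if c < j*q then Mm q i z $$ (r,c) else 0))"
      "c < dim_col (mat (j*q) ((j+1)*q) (\<lambda>(r,c). if c < j*q then Mm q i z $$ (r,c) else 0))"
    then have rc: "r < j*q" "c < (j+1)*q" by auto
    show "mat (j*q) ((j+1)*q) (\<lambda>(r,c). Mm q j z $$ (0+r, c)) $$ (r,c) = mat (j*q) ((j+1)*q) (\<lambda>(r,c). if c < j*q then Mm q i z $$ (r,c) else 0) $$ (r,c)"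
    proof (cases "c < j*q")
      case True
      have r1: "r < (j+1)*q" using rc by simp
      have r2: "r < (i+1)*q" "c < (i+1)*q" using rc True ji by auto
      show ?thesis using True rc Mm_index[OF q r1 rc(2)] Mm_index[OF q r2] by simp
    next
      case False
      then have "r \<le> c" "r \<noteq> c" using rc by auto
      then show ?thesis using False rc Mm_upper[OF q \<open>r \<le> c\<close> rc(2)] by simp
    qed
  qed auto
  also have "\<dots> = Mm q i z * mat_adjoint (Em q j)"
    using ji by (subst mult_adj_sel[OF Mc]) auto
  finally show ?thesis using ji by simp
qed

lemma ER: assumes q: "q \<ge> 1" and j: "j \<ge> 1"
  shows "mat_adjoint (Em q j) * Rm q j z = Rm q (j-1) z * mat_adjoint (Em q j)"
proof -
  obtain i where ji: "j = Suc i" using j by (cases j) auto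
  note R = Rm_inv[OF q, of j z] and R' = Rm_inv[OF q, of i z]
  have d[simp]: "dim_row (Rm q j z) = (j+1)*q" "dim_col (Rm q j z) = (j+1)*q"
    "dim_row (Rm q i z) = j*q" "dim_col (Rm q i z) = j*q"
    "dim_row (Mm q j z) = (j+1)*q" "dim_col (Mm q j z) = (j+1)*q"
    "dim_row (Mm q i z) = j*q" "dim_col (Mm q i z) = j*q" using R R' Mm_carrier[of q j z] Mm_carrier[of q i z] ji by auto
  have EM': "mat_adjoint (Em q j) * Mm q j z = Mm q i z * mat_adjoint (Em q j)" using EM[OF q j] ji by simp
  have "mat_adjoint (Em q j) * Rm q j z = (Rm q i z * Mm q i z) * (mat_adjoint (Em q j) * Rm q j z)"
    using R'(3) ji by simp
  also have "\<dots> = Rm q i z * ((Mm q i z * mat_adjoint (Em q j)) * Rm q j z)" by (simp add: M_assoc)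
  also have "\<dots> = Rm q i z * ((mat_adjoint (Em q j) * Mm q j z) * Rm q j z)" by (simp only: EM')
  also have "\<dots> = Rm q i z * (mat_adjoint (Em q j) * (Mm q j z * Rm q j z))" by (simp add: M_assoc)
  also have "\<dots> = Rm q i z * mat_adjoint (Em q j)" using R(2) by simp
  finally show ?thesis using ji by simp
qed

lemma E_block_col: assumes q: "q \<ge> 1"
  shows "mat_adjoint (Em q j) * block_col q (j+1) f = block_col q j f"
proof -
  have "mat_adjoint (Em q j) * block_col q (j+1) f = mat (j*q) q (\<lambda>(r,c). block_col q (j+1) f $$ (0+r, c))"
    by (rule sel_mult) (auto simp: block_col_def)
  also have "\<dots> = block_col q j f"
    by (rule eq_matI) (auto simp: block_col_def block_mat_index)
  finally show ?thesis .
qed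




context
  fixes q n :: nat and a b :: real and s :: "nat \<Rightarrow> complex mat" and j :: nat
  assumes q: "q \<ge> 1" and s_dim: "\<And>k. k \<le> 2*n+1 \<Longrightarrow> s k \<in> carrier_mat q q"
    and s_herm: "\<And>k. k \<le> 2*n+1 \<Longrightarrow> hermitian (s k)"
    and pd2: "pos_def (H2 q a b s (n-1))" and n1: "n \<ge> 1"
    and j1: "1 \<le> j" and jn: "j \<le> n - 1"
begin

lemma Y2c: "Y2 q a b s j \<in> carrier_mat (j*q) q" by (auto simp: Y2_def block_col_def block_mat_def)

abbreviation "W \<equiv> rowP q a b s j"
abbreviation "GG \<equiv> minv (H2 q a b s (j-1))"
abbreviation "KK \<equiv> minv (Hhat2 q a b s j)"
abbreviation "EE \<equiv> Em q j"

lemma Hinv': "minv (H2 q a b s j) = EE * (GG * mat_adjoint EE) + mat_adjoint W * (KK * W)"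
  apply (rule Hinv[OF q]) using s_dim s_herm pd2 n1 j1 jn by auto
lemma Gc': "GG \<in> carrier_mat (j*q) (j*q)"
  apply (rule Gc[OF q]) using s_dim s_herm pd2 n1 j1 jn by auto
lemma Kc': "KK \<in> carrier_mat q q"
  apply (rule Kc[OF q]) using s_dim s_herm pd2 n1 j1 jn by auto

lemma dims[simp]:
  "dim_row GG = j*q" "dim_col GG = j*q" "dim_row KK = q" "dim_col KK = q"
  "dim_row W = q" "dim_col W = q + j*q"
  "dim_row (Rm q j z) = q + j*q" "dim_col (Rm q j z) = q + j*q"
  "dim_row (Rm q (j-1) z) = j*q" "dim_col (Rm q (j-1) z) = j*q"
  "dim_row (Y2 q a b s j) = j*q" "dim_col (Y2 q a b s j) = q"
proof -
  obtain i where ji: "j = Suc i" using j1 by (cases j) auto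
  show "dim_row GG = j*q" "dim_col GG = j*q" "dim_row KK = q" "dim_col KK = q"
    "dim_row (Y2 q a b s j) = j*q" "dim_col (Y2 q a b s j) = q" using Gc' Kc' Y2c by auto
  show "dim_row W = q" "dim_col W = q + j*q" unfolding rowP_def hcat_def using Gc' Y2c by auto
  show "dim_row (Rm q j z) = q + j*q" "dim_col (Rm q j z) = q + j*q"
    "dim_row (Rm q (j-1) z) = j*q" "dim_col (Rm q (j-1) z) = j*q"
  proof -
    have jj: "j - 1 + 1 = j" using j1 by simp
    show "dim_row (Rm q j z) = q + j*q" "dim_col (Rm q j z) = q + j*q"
      using Rm_inv(1)[OF q, of j z] by auto
    show "dim_row (Rm q (j-1) z) = j*q" "dim_col (Rm q (j-1) z) = j*q"
    proof -
      have "Rm q (j-1) z \<in> carrier_mat (j*q) (j*q)" using Rm_inv(1)[OF q, of i z] ji by simp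
      then show "dim_row (Rm q (j-1) z) = j*q" "dim_col (Rm q (j-1) z) = j*q" by auto
    qed
  qed
qed

lemmas dims'[simp] = dims[simplified]

lemma adjXE: "mat_adjoint (Rm q j z) * EE = EE * mat_adjoint (Rm q (j-1) z)"
proof -
  have "mat_adjoint (mat_adjoint EE * Rm q j z) = mat_adjoint (Rm q (j-1) z * mat_adjoint EE)"
    using ER[OF q j1] by simp
  moreover have "mat_adjoint (mat_adjoint EE * Rm q j z) = mat_adjoint (Rm q j z) * EE"
    by (subst adj_mult[of _ "j*q" "(j+1)*q" _ "(j+1)*q"]) (auto intro: carrier_matI)
  moreover have "mat_adjoint (Rm q (j-1) z * mat_adjoint EE) = EE * mat_adjoint (Rm q (j-1) z)"
    by (subst adj_mult[of _ "j*q" "j*q" _ "(j+1)*q"]) (auto intro: carrier_matI)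
  ultimately show ?thesis by simp
qed



lemma Mid_split:
  "Mid q a b s j z = EE * (Mid q a b s (j-1) z * mat_adjoint EE)
     + mat_adjoint (W * Rm q j (cnj z)) * (KK * (W * Rm q j (complex_of_real a)))"
proof -
  let ?X = "Rm q j (cnj z)" and ?Z = "Rm q j (complex_of_real a)"
  let ?X' = "Rm q (j-1) (cnj z)" and ?Z' = "Rm q (j-1) (complex_of_real a)"
  have R1[simp]: "dim_row T = j*q \<Longrightarrow> mat_adjoint ?X * (EE * T) = EE * (mat_adjoint ?X' * T)" for T
    by (simp add: adjXE[simplified] flip: M_assoc)
  have R2[simp]: "dim_row T = q + j*q \<Longrightarrow> mat_adjoint EE * (?Z * T) = ?Z' * (mat_adjoint EE * T)" for T
    using ER[OF q j1, of "complex_of_real a", simplified] by (simp flip: M_assoc)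
  have R3[simp]: "dim_row T = q \<Longrightarrow> mat_adjoint ?X * (mat_adjoint W * T) = mat_adjoint (W * ?X) * T" for T
  proof -
    assume "dim_row T = q"
    have "mat_adjoint (W * ?X) = mat_adjoint ?X * mat_adjoint W"
      by (rule adj_mult[of _ q "q + j*q" _ "q+j*q"]) (auto intro: carrier_matI)
    then show ?thesis using \<open>dim_row T = q\<close> by (simp add: M_assoc)
  qed
  show ?thesis unfolding Mid_def Hinv' by (simp add: M R1[simplified] R2[simplified] ER[OF q j1, simplified])
qed


lemma s0c: "s 0 \<in> carrier_mat q q" using s_dim by auto
lemma s1c: "s 1 \<in> carrier_mat q q" using s_dim n1 by auto
lemma s0adj: "mat_adjoint (s 0) = s 0" using s_herm[of 0] hermitian_adj by auto

lemma dims2[simp]: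
  "dim_row (s 0) = q" "dim_col (s 0) = q"
  "dim_row (vm q j) = q + j*q" "dim_col (vm q j) = q"
  "dim_row (u2 q a b s j) = q + j*q" "dim_col (u2 q a b s j) = q"
  "dim_row (vm q (j - Suc 0)) = j*q" "dim_col (vm q (j - Suc 0)) = q"
  "dim_row (u2 q a b s (j - Suc 0)) = j*q" "dim_col (u2 q a b s (j - Suc 0)) = q"
  "dim_row (Mid q a b s (j - Suc 0) z) = j*q" "dim_col (Mid q a b s (j - Suc 0) z) = j*q"
  using s0c j1 by (auto simp: vm_def u2_def block_col_def Mid_def)

lemma LMC: assumes L: "dim_row L = q" "dim_col L = q + j*q" and C: "dim_row C = q + j*q" "dim_col C = q"
  shows "L * Mid q a b s j z * C = L * EE * Mid q a b s (j-1) z * (mat_adjoint EE * C)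
     + mat_adjoint (W * (Rm q j (cnj z) * mat_adjoint L)) * KK * (W * (Rm q j (complex_of_real a) * C))"
proof -
  let ?X = "Rm q j (cnj z)"
  have "mat_adjoint (W * (?X * mat_adjoint L)) = mat_adjoint (?X * mat_adjoint L) * mat_adjoint W"
    by (rule adj_mult[of _ q "q+j*q" _ q]; intro carrier_matI; simp add: L)
  also have "mat_adjoint (?X * mat_adjoint L) = L * mat_adjoint ?X"
    by (subst adj_mult[of _ "q+j*q" "q+j*q" _ q]; (intro carrier_matI)?; simp add: L)
  finally have R3: "mat_adjoint (W * (?X * mat_adjoint L)) = L * mat_adjoint ?X * mat_adjoint W" .
  have "mat_adjoint ?X * mat_adjoint W = mat_adjoint (W * ?X)"
    by (rule adj_mult[of _ q "q+j*q" _ "q+j*q", symmetric]) (auto intro: carrier_matI)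
  then have R4: "mat_adjoint (W * (?X * mat_adjoint L)) = L * mat_adjoint (W * ?X)"
    unfolding R3 using L by (simp add: M_assoc)
  show ?thesis unfolding Mid_split[of z] R4 using L C by (simp add: M)
qed


lemma adjE: assumes "dim_row X = q + j*q" shows "mat_adjoint X * sel (q + j*q) (j*q) 0 = mat_adjoint (mat_adjoint (sel (q + j*q) (j*q) 0) * X)"
  by (subst adj_mult[of _ "j*q" "q + j*q" _ "dim_col X"]) (use assms in \<open>auto intro!: carrier_matI\<close>)

lemma jj: "j - 1 + 1 = j" using j1 by simp

lemma F2: "mat_adjoint EE * vm q j = vm q (j-1)"
  unfolding vm_def using E_block_col[OF q, of j] jj by simp

lemma Fu: "mat_adjoint EE * u2 q a b s j = u2 q a b s (j-1)"
  unfolding u2_def using E_block_col[OF q, of j] jj by simp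

lemma F1: "Lrow q a b s j z * EE = Lrow q a b s (j-1) z"
proof -
  have "Lrow q a b s j z * EE = mat_adjoint (u2 q a b s j) * EE + z \<cdot>\<^sub>m (s 0 * (mat_adjoint (vm q j) * EE))"
    unfolding Lrow_def by (simp add: M)
  also have "\<dots> = Lrow q a b s (j-1) z"
    unfolding Lrow_def by (simp add: adjE F2[simplified] Fu[simplified])
  finally show ?thesis .
qed

lemma F4: "mat_adjoint (vm q j) * EE = mat_adjoint (vm q (j-1))"
  by (simp add: adjE F2[simplified])

lemma F3: "mat_adjoint EE * Rcol q a b s j = Rcol q a b s (j-1)"
  unfolding Rcol_def using F2 Fu by (simp add: M flip: M_assoc)

lemma F5: "mat_adjoint (Lrow q a b s j z) = u2 q a b s j + cnj z \<cdot>\<^sub>m (vm q j * s 0)"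
proof -
  have "mat_adjoint (s 0 * mat_adjoint (vm q j)) = vm q j * s 0"
    by (subst adj_mult[of _ q q _ "q + j*q"]) (auto intro!: carrier_matI simp: s0adj)
  then show ?thesis unfolding Lrow_def
    by (subst adj_add[of _ q "q + j*q"]) (auto intro!: carrier_matI simp: adj_smult)
qed


lemma jnz: "j \<noteq> 0" using j1 by simp

lemma G1: "W * (Rm q j (cnj z) * mat_adjoint (Lrow q a b s j z)) = - Q2 q a b s j (cnj z)"
  unfolding F5 Q2_def using jnz by (simp add: M_assoc)
lemma G2: "W * (Rm q j w * vm q j) = P2 q a b s j w"
  unfolding P2_def using jnz by (simp add: M_assoc)
lemma G4: "W * (Rm q j (complex_of_real a) * Rcol q a b s j) = - Q2 q a b s j (complex_of_real a)"
  unfolding Q2_def Rcol_def using jnz by (simp add: M_assoc)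

lemma dims3[simp]:
  "dim_row (Q2 q a b s j w) = q" "dim_col (Q2 q a b s j w) = q"
  "dim_row (P2 q a b s j w) = q" "dim_col (P2 q a b s j w) = q"
  "dim_row (Lrow q a b s j z) = q" "dim_col (Lrow q a b s j z) = q + j*q"
  "dim_row (Rcol q a b s j) = q + j*q" "dim_col (Rcol q a b s j) = q"
  "dim_row (Lrow q a b s (j - Suc 0) z) = q" "dim_col (Lrow q a b s (j - Suc 0) z) = j*q"
  "dim_row (Rcol q a b s (j - Suc 0)) = j*q" "dim_col (Rcol q a b s (j - Suc 0)) = q"
  using jnz by (auto simp: Q2_def P2_def Lrow_def Rcol_def)

lemma final:
  "alpha2 q a b s j z = alpha2 q a b s (j-1) z
            + (z - complex_of_real a) \<cdot>\<^sub>m (mat_adjoint (Q2 q a b s j (cnj z))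
                 * minv (Hhat2 q a b s j) * P2 q a b s j (complex_of_real a))
       \<and> beta2 q a b s j z = beta2 q a b s (j-1) z
            + (z - complex_of_real a) \<cdot>\<^sub>m (mat_adjoint (Q2 q a b s j (cnj z))
                 * minv (Hhat2 q a b s j) * Q2 q a b s j (complex_of_real a))
       \<and> gamma2 q a b s j z = gamma2 q a b s (j-1) z
            - (z - complex_of_real a) \<cdot>\<^sub>m (mat_adjoint (P2 q a b s j (cnj z))
                 * minv (Hhat2 q a b s j) * P2 q a b s j (complex_of_real a))
       \<and> delta2 q a b s j z = delta2 q a b s (j-1) z
            - (z - complex_of_real a) \<cdot>\<^sub>m (mat_adjoint (P2 q a b s j (cnj z))
                 * minv (Hhat2 q a b s j) * Q2 q a b s j (complex_of_real a))"
proof -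
  let ?c = "z - complex_of_real a"
  let ?Qz = "Q2 q a b s j (cnj z)" and ?Qa = "Q2 q a b s j (complex_of_real a)"
  let ?Pz = "P2 q a b s j (cnj z)" and ?Pa = "P2 q a b s j (complex_of_real a)"
  have A: "Lrow q a b s j z * Mid q a b s j z * vm q j = Lrow q a b s (j-1) z * Mid q a b s (j-1) z * vm q (j-1)
      + mat_adjoint (- ?Qz) * KK * ?Pa"
    by (subst LMC) (simp_all add: F1[simplified] F2[simplified] G1 G2)
  have B: "Lrow q a b s j z * Mid q a b s j z * Rcol q a b s j = Lrow q a b s (j-1) z * Mid q a b s (j-1) z * Rcol q a b s (j-1)
      + mat_adjoint (- ?Qz) * KK * (- ?Qa)"
    by (subst LMC) (simp_all add: F1[simplified] F3[simplified] G1 G4)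
  have C: "mat_adjoint (vm q j) * Mid q a b s j z * vm q j = mat_adjoint (vm q (j-1)) * Mid q a b s (j-1) z * vm q (j-1)
      + mat_adjoint ?Pz * KK * ?Pa"
    by (subst LMC) (simp_all add: F4[simplified] F2[simplified] G2)
  have D: "mat_adjoint (vm q j) * Mid q a b s j z * Rcol q a b s j = mat_adjoint (vm q (j-1)) * Mid q a b s (j-1) z * Rcol q a b s (j-1)
      + mat_adjoint ?Pz * KK * (- ?Qa)"
    by (subst LMC) (simp_all add: F4[simplified] F3[simplified] G2 G4)
  have d: "dim_row (Lrow q a b s (j-1) z * Mid q a b s (j-1) z * vm q (j-1)) = q"
    "dim_col (Lrow q a b s (j-1) z * Mid q a b s (j-1) z * vm q (j-1)) = q"
    "dim_row (Lrow q a b s (j-1) z * Mid q a b s (j-1) z * Rcol q a b s (j-1)) = q"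
    "dim_col (Lrow q a b s (j-1) z * Mid q a b s (j-1) z * Rcol q a b s (j-1)) = q"
    "dim_row (mat_adjoint (vm q (j-1)) * Mid q a b s (j-1) z * vm q (j-1)) = q"
    "dim_col (mat_adjoint (vm q (j-1)) * Mid q a b s (j-1) z * vm q (j-1)) = q"
    "dim_row (mat_adjoint (vm q (j-1)) * Mid q a b s (j-1) z * Rcol q a b s (j-1)) = q"
    "dim_col (mat_adjoint (vm q (j-1)) * Mid q a b s (j-1) z * Rcol q a b s (j-1)) = q"
    by simp_all
  have 1: "alpha2 q a b s j z = alpha2 q a b s (j-1) z + ?c \<cdot>\<^sub>m (mat_adjoint ?Qz * KK * ?Pa)"
    unfolding alpha2_def A using d(1,2) by (intro eq_matI) (auto simp: adj_uminus M_uml algebra_simps)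
  have 2: "beta2 q a b s j z = beta2 q a b s (j-1) z + ?c \<cdot>\<^sub>m (mat_adjoint ?Qz * KK * ?Qa)"
    unfolding beta2_def B using d(3,4) by (intro eq_matI) (auto simp: adj_uminus M_uml M_umr algebra_simps)
  have 3: "gamma2 q a b s j z = gamma2 q a b s (j-1) z - ?c \<cdot>\<^sub>m (mat_adjoint ?Pz * KK * ?Pa)"
    unfolding gamma2_def C using d(5,6) by (intro eq_matI) (auto simp: algebra_simps)
  have 4: "delta2 q a b s j z = delta2 q a b s (j-1) z - ?c \<cdot>\<^sub>m (mat_adjoint ?Pz * KK * ?Qa)"
    unfolding delta2_def D using d(7,8) by (intro eq_matI) (auto simp: M_umr algebra_simps)
  show ?thesis using 1 2 3 4 by blast
qed

end

theorem mainTheorem1: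
  fixes q n :: nat and a b :: real and s :: "nat \<Rightarrow> complex mat"
  assumes q: "q \<ge> 1"
    and ab: "a < b"
    and s_dim: "\<And>k. k \<le> 2*n+1 \<Longrightarrow> s k \<in> carrier_mat q q"
    and s_herm: "\<And>k. k \<le> 2*n+1 \<Longrightarrow> hermitian (s k)"
    and pd1: "pos_def (H1 q s n)"
    and pd2: "pos_def (H2 q a b s (n-1))"
    and pd3: "pos_def (K1 q b s n)"
    and pd4: "pos_def (K2 q a s n)"
    and j: "1 \<le> j" "j \<le> n - 1"
  shows "alpha2 q a b s j z = alpha2 q a b s (j-1) z
            + (z - complex_of_real a) \<cdot>\<^sub>m (mat_adjoint (Q2 q a b s j (cnj z))
                 * minv (Hhat2 q a b s j) * P2 q a b s j (complex_of_real a))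
       \<and> beta2 q a b s j z = beta2 q a b s (j-1) z
            + (z - complex_of_real a) \<cdot>\<^sub>m (mat_adjoint (Q2 q a b s j (cnj z))
                 * minv (Hhat2 q a b s j) * Q2 q a b s j (complex_of_real a))
       \<and> gamma2 q a b s j z = gamma2 q a b s (j-1) z
            - (z - complex_of_real a) \<cdot>\<^sub>m (mat_adjoint (P2 q a b s j (cnj z))
                 * minv (Hhat2 q a b s j) * P2 q a b s j (complex_of_real a))
       \<and> delta2 q a b s j z = delta2 q a b s (j-1) z
            - (z - complex_of_real a) \<cdot>\<^sub>m (mat_adjoint (P2 q a b s j (cnj z))
                 * minv (Hhat2 q a b s j) * Q2 q a b s j (complex_of_real a))"
  proof -
  have n1: "n \<ge> 1" using j by simp
  show ?thesis
    by (rule final[where q=q and n=n and a=a and b=b and s=s and j=j and z=z]) (use q s_dim s_herm pd2 n1 j in auto)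
qed

end
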